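(* There is an indexed family that is PRT[O]-learnable but not PRT[T]-learnable.
   Context: An indexed family is a sequence $\mathcal F=(F_n)_{n\in\mathbb N}$ of subsets of $\mathbb N$ that is uniformly computably enumerable; $F\in\mathcal F$ means $F=F_n$ for some $n$, and $\mathrm{mi}_{\mathcal F}(F)$ is the least $n$ with $F_n=F$. An enumeration of a nonempty set $A$ is an infinite sequence of elements of $A$ in which every element of $A$ occurs; $f\restriction n$ is its initial segment of length $n$, and $\mathrm{content}(\sigma)$ is the set of entries of a finite string $\sigma$. A learner is a partial computable function from finite strings of naturals to naturals; hypothesis $h$ is interpreted as $F_h$. $M$ converges to a correct index on an enumeration $f$ of $F$ if there is $i$ with $M(f\restriction j)=M(f\restriction i)$ for all $j\ge i$ and $F_{M(f\restriction i)}=F$. $\mathcal F$ is PRT-learnable if there are a learner $M$ and a polynomial $p$ such that for every $F\in\mathcal F$ and every enumeration $f$ of $F$, $M$ converges to a correct index on $f$ in fewer than $p(\mathrm{mi}_{\mathcal F}(F))$ computation steps, with the number of oracle queries (if an oracle is used) also bounded by $p(\mathrm{mi}_{\mathcal F}(F))$. A teacher is a computable map $T$ on finite strings with $T(\sigma)$ a prefix of $T(\tau)$ whenever $\sigma$ is a prefix of $\tau$, and $\mathrm{content}(T(\sigma))\subseteq\mathrm{content}(\sigma)$. PRT[O]-learnable: some learner with a membership oracle for the target set PRT-learns $\mathcal F$. PRT[T]-learnable: there is a learner-teacher pair $(M,T)$ such that $M$, fed $T(f\restriction n)$ in place of $f\restriction n$, meets the PRT criterion for every enumeration $f$ of every member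 of $\mathcal F$, counting only the learner's computation. *)

theory Defs
  imports "HOL-Computational_Algebra.Polynomial" "HOL-Library.Sublist"
begin

text \<open>Tape symbols are naturals; 0 is the blank, 1 and 2 are the binary digits 0 and 1,
  3 is a separator.  Start state 0, head at cell 0.
  A query rule reads the number written (in binary, least significant digit first) at the
  head and branches on whether it belongs to the oracle set; a query costs one step.\<close>

datatype move = MoveL | MoveR | Stay

datatype rule =
    Wr nat nat nat nat move   \<comment> \<open>state, read symbol, new state, written symbol, move\<close>
  | Qu nat nat nat            \<comment> \<open>state, state if answer yes, state if answer no\<close>

type_synonym tm = "rule list"
type_synonym config = "nat \<times> (int \<Rightarrow> nat) \<times> int"

fun bin :: "nat \<Rightarrow> nat list" where
  "bin n = (if n = 0 then [] else (n mod 2 + 1) # bin (n div 2))"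

definition enc_list :: "nat list \<Rightarrow> nat list" where
  "enc_list \<sigma> = concat (map (\<lambda>x. bin x @ [3]) \<sigma>)"

definition tape_of :: "nat list \<Rightarrow> int \<Rightarrow> nat" where
  "tape_of w = (\<lambda>i. if 0 \<le> i \<and> nat i < length w then w ! nat i else 0)"

definition read_nat :: "(int \<Rightarrow> nat) \<Rightarrow> int \<Rightarrow> nat" where
  "read_nat tp h = (let k = (LEAST k. tp (h + int k) \<notin> {1, 2})
                    in (\<Sum>i<k. (tp (h + int i) - 1) * 2 ^ i))"

definition mv :: "move \<Rightarrow> int" where
  "mv m = (case m of MoveL \<Rightarrow> -1 | MoveR \<Rightarrow> 1 | Stay \<Rightarrow> 0)"

fun applies :: "config \<Rightarrow> rule \<Rightarrow> bool" where
  "applies (q, tp, h) (Wr q0 a _ _ _) = (q = q0 \<and> tp h = a)"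
| "applies (q, tp, h) (Qu q0 _ _) = (q = q0)"

fun fire :: "nat set \<Rightarrow> config \<Rightarrow> rule \<Rightarrow> config" where
  "fire A (q, tp, h) (Wr _ _ q' b m) = (q', tp(h := b), h + mv m)"
| "fire A (q, tp, h) (Qu _ qy qn) = ((if read_nat tp h \<in> A then qy else qn), tp, h)"

definition tm_step :: "nat set \<Rightarrow> tm \<Rightarrow> config \<Rightarrow> config option" where
  "tm_step A M c = map_option (fire A c) (find (applies c) M)"

definition halted :: "tm \<Rightarrow> config \<Rightarrow> bool" where
  "halted M c \<longleftrightarrow> find (applies c) M = None"

fun is_query :: "rule option \<Rightarrow> bool" where
  "is_query (Some (Qu _ _ _)) = True"
| "is_query _ = False"

definition oracle_free :: "tm \<Rightarrow> bool" where
  "oracle_free M \<longleftrightarrow> (\<forall>r \<in> set M. \<not> is_query (Some r))"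

fun steps :: "nat set \<Rightarrow> tm \<Rightarrow> config \<Rightarrow> nat \<Rightarrow> config" where
  "steps A M c 0 = c"
| "steps A M c (Suc n) =
     (case tm_step A M (steps A M c n) of None \<Rightarrow> steps A M c n | Some c' \<Rightarrow> c')"

definition init :: "nat list \<Rightarrow> config" where
  "init \<sigma> = (0, tape_of (enc_list \<sigma>), 0)"

definition conf :: "nat set \<Rightarrow> tm \<Rightarrow> nat list \<Rightarrow> nat \<Rightarrow> config" where
  "conf A M \<sigma> t = steps A M (init \<sigma>) t"

definition halts_at :: "nat set \<Rightarrow> tm \<Rightarrow> nat list \<Rightarrow> nat \<Rightarrow> bool" where
  "halts_at A M \<sigma> t \<longleftrightarrow> halted M (conf A M \<sigma> t) \<and> (\<forall>s<t. \<not> halted M (conf A M \<sigma> s))"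

definition queries :: "nat set \<Rightarrow> tm \<Rightarrow> nat list \<Rightarrow> nat \<Rightarrow> nat" where
  "queries A M \<sigma> t = card {s. s < t \<and> is_query (find (applies (conf A M \<sigma> s)) M)}"

definition tape_holds :: "(int \<Rightarrow> nat) \<Rightarrow> int \<Rightarrow> nat list \<Rightarrow> bool" where
  "tape_holds tp h w \<longleftrightarrow> (\<forall>i<length w. tp (h + int i) = w ! i) \<and> tp (h + int (length w)) = 0"

definition outputs :: "nat set \<Rightarrow> tm \<Rightarrow> nat list \<Rightarrow> nat list \<Rightarrow> bool" where
  "outputs A M \<sigma> w \<longleftrightarrow>
     (\<exists>t. halts_at A M \<sigma> t \<and> (case conf A M \<sigma> t of (q, tp, h) \<Rightarrow> tape_holds tp h w))"

definition learner_val :: "nat set \<Rightarrow> tm \<Rightarrow> nat list \<Rightarrow> nat \<Rightarrow> bool" where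
  "learner_val A M \<sigma> n \<longleftrightarrow> outputs A M \<sigma> (bin n)"

definition indexed_family :: "(nat \<Rightarrow> nat set) \<Rightarrow> bool" where
  "indexed_family Fam \<longleftrightarrow>
     (\<exists>E. oracle_free E \<and> (\<forall>n x. x \<in> Fam n \<longleftrightarrow> (\<exists>t. halts_at {} E [n, x] t)))"

definition mi :: "(nat \<Rightarrow> nat set) \<Rightarrow> nat set \<Rightarrow> nat" where
  "mi Fam F = (LEAST n. Fam n = F)"

definition restr :: "(nat \<Rightarrow> nat) \<Rightarrow> nat \<Rightarrow> nat list" where
  "restr f n = map f [0..<n]"

definition enumeration :: "(nat \<Rightarrow> nat) \<Rightarrow> nat set \<Rightarrow> bool" where
  "enumeration f A \<longleftrightarrow> A \<noteq> {} \<and> range f = A"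

definition computable_total :: "(nat list \<Rightarrow> nat list) \<Rightarrow> bool" where
  "computable_total T \<longleftrightarrow> (\<exists>N. oracle_free N \<and> (\<forall>\<sigma>. outputs {} N \<sigma> (enc_list (T \<sigma>))))"

definition teacher :: "(nat list \<Rightarrow> nat list) \<Rightarrow> bool" where
  "teacher T \<longleftrightarrow> computable_total T
     \<and> (\<forall>\<sigma> \<tau>. prefix \<sigma> \<tau> \<longrightarrow> prefix (T \<sigma>) (T \<tau>))
     \<and> (\<forall>\<sigma>. set (T \<sigma>) \<subseteq> set \<sigma>)"

definition prt_conv ::
  "(nat \<Rightarrow> nat set) \<Rightarrow> nat set \<Rightarrow> tm \<Rightarrow> (nat \<Rightarrow> nat list) \<Rightarrow> nat set \<Rightarrow> nat \<Rightarrow> bool" where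
  "prt_conv Fam A M g F b \<longleftrightarrow>
     (\<exists>i h ts. (\<forall>j\<ge>i. learner_val A M (g j) h) \<and> Fam h = F
        \<and> (\<forall>j\<le>i. halts_at A M (g j) (ts j))
        \<and> (\<Sum>j\<le>i. ts j) < b
        \<and> (\<Sum>j\<le>i. queries A M (g j) (ts j)) \<le> b)"

definition PRT_O_learnable :: "(nat \<Rightarrow> nat set) \<Rightarrow> bool" where
  "PRT_O_learnable Fam \<longleftrightarrow>
     (\<exists>M (p :: nat poly). \<forall>F \<in> range Fam. \<forall>f. enumeration f F \<longrightarrow>
        prt_conv Fam F M (restr f) F (poly p (mi Fam F)))"

definition PRT_T_learnable :: "(nat \<Rightarrow> nat set) \<Rightarrow> bool" where
  "PRT_T_learnable Fam \<longleftrightarrow>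
     (\<exists>M T (p :: nat poly). oracle_free M \<and> teacher T \<and>
        (\<forall>F \<in> range Fam. \<forall>f. enumeration f F \<longrightarrow>
           prt_conv Fam {} M (\<lambda>n. T (restr f n)) F (poly p (mi Fam F))))"

end

theory Submission
  imports Defs
begin


declare bin.simps[simp del]

definition Fam0 :: "nat \<Rightarrow> nat set" where
  "Fam0 n = (if n = 0 then {0,1} else {0})"

lemma halts_at_unique:
  assumes "halts_at A M \<sigma> t1" "halts_at A M \<sigma> t2" shows "t1 = t2"
  using assms unfolding halts_at_def by (metis linorder_neqE_nat)

lemma tape_holds_unique:
  assumes "tape_holds tp h w1" "tape_holds tp h w2"
    "\<forall>x\<in>set w1. x \<noteq> 0" "\<forall>x\<in>set w2. x \<noteq> 0"
  shows "w1 = w2"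
proof -
  have "\<not> length w1 < length w2" if "tape_holds tp h w1" "tape_holds tp h w2"
    "\<forall>x\<in>set w2. x \<noteq> 0" for w1 w2
    using that unfolding tape_holds_def by (metis nth_mem)
  then have "length w1 = length w2" using assms by (meson linorder_neqE_nat)
  then show ?thesis using assms unfolding tape_holds_def
    by (metis nth_equalityI)
qed

lemma bin_set: "set (bin n) \<subseteq> {1,2}"
proof (induction n rule: bin.induct)
  case (1 n)
  have "n mod 2 + 1 \<in> {1,2}" by (cases "even n") auto
  then show ?case using 1 by (subst bin.simps) auto
qed

lemma bin_eq_Nil: "bin n = [] \<longleftrightarrow> n = 0"
  by (subst bin.simps) auto

lemma bin_inj: "bin m = bin n \<Longrightarrow> m = n"
proof (induction m arbitrary: n rule: bin.induct)
  case (1 m)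
  show ?case
  proof (cases "m = 0")
    case True
    then show ?thesis using 1(2) bin_eq_Nil by metis
  next
    case False
    then have n0: "n \<noteq> 0" using 1(2) bin_eq_Nil by metis
    have "(m mod 2 + 1) # bin (m div 2) = (n mod 2 + 1) # bin (n div 2)"
      using 1(2) False n0 by (metis bin.simps)
    then have "m mod 2 = n mod 2" "m div 2 = n div 2" using 1(1) False by auto
    then show ?thesis by (metis div_mult_mod_eq)
  qed
qed

lemma learner_val_fun:
  assumes "learner_val A M \<sigma> h1" "learner_val A M \<sigma> h2" shows "h1 = h2"
proof -
  obtain t1 where t1: "halts_at A M \<sigma> t1" "case conf A M \<sigma> t1 of (q, tp, h) \<Rightarrow> tape_holds tp h (bin h1)"
    using assms(1) unfolding learner_val_def outputs_def by (elim exE conjE) (rule that)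
  obtain t2 where t2: "halts_at A M \<sigma> t2" "case conf A M \<sigma> t2 of (q, tp, h) \<Rightarrow> tape_holds tp h (bin h2)"
    using assms(2) unfolding learner_val_def outputs_def by (elim exE conjE) (rule that)
  have "t1 = t2" using t1(1) t2(1) by (rule halts_at_unique)
  obtain q tp hd where c: "conf A M \<sigma> t1 = (q, tp, hd)" by (metis prod_cases3)
  have a1: "tape_holds tp hd (bin h1)" using t1(2) unfolding c by (simp only: prod.case)
  have a2: "tape_holds tp hd (bin h2)" using t2(2) unfolding \<open>t1 = t2\<close>[symmetric] c by (simp only: prod.case)
  have nz: "\<forall>x\<in>set (bin n). x \<noteq> 0" for n using bin_set[of n] by auto
  have "bin h1 = bin h2" using tape_holds_unique[OF a1 a2 nz nz] .
  then show ?thesis using bin_inj by metis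
qed

lemma enc_set: "set (enc_list \<sigma>) \<subseteq> {1,2,3}"
proof
  fix x assume "x \<in> set (enc_list \<sigma>)"
  then have "\<exists>y\<in>set \<sigma>. x \<in> set (bin y @ [3])" unfolding enc_list_def by (simp only: set_concat set_map) blast
  then obtain y where "y \<in> set \<sigma>" "x \<in> set (bin y @ [3])" by blast
  then show "x \<in> {1,2,3}" using bin_set[of y] by auto
qed

lemma enc_nonempty: "\<sigma> \<noteq> [] \<Longrightarrow> 3 \<in> set (enc_list \<sigma>)"
  unfolding enc_list_def by (cases \<sigma>) auto

lemma enc_Nil: "enc_list [] = []" unfolding enc_list_def by simp

lemma halt0_val:
  assumes "halts_at A M \<sigma> 0" "learner_val A M \<sigma> h" shows "h = 0"
proof (rule ccontr)
  assume h0: "h \<noteq> 0"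
  obtain t where t: "halts_at A M \<sigma> t" "case conf A M \<sigma> t of (q, tp, hh) \<Rightarrow> tape_holds tp hh (bin h)"
    using assms(2) unfolding learner_val_def outputs_def by (elim exE conjE) (rule that)
  have "t = 0" using halts_at_unique[OF t(1) assms(1)] .
  define e where "e = enc_list \<sigma>"
  define w where "w = bin h"
  have th: "tape_holds (tape_of e) 0 w"
    using t \<open>t = 0\<close> unfolding conf_def init_def e_def w_def by simp
  have wne: "w \<noteq> []" using h0 bin_eq_Nil w_def by metis
  have wset: "set w \<subseteq> {1,2}" using bin_set w_def by metis
  have eset: "set e \<subseteq> {1,2,3}" using enc_set e_def by metis
  show False
  proof (cases "e = []")
    case True
    then have "tape_of e 0 = 0" unfolding tape_of_def by simp
    moreover have "tape_of e 0 = w ! 0" using th wne unfolding tape_holds_def by force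
    moreover have "w ! 0 \<in> {1,2}" using wne wset nth_mem by fastforce
    ultimately show False by auto
  next
    case False
    then have "\<sigma> \<noteq> []" using enc_Nil e_def by metis
    then have "3 \<in> set e" using enc_nonempty e_def by metis
    then obtain i where i: "i < length e" "e ! i = 3" by (metis in_set_conv_nth)
    have "length e \<le> length w"
    proof (rule ccontr)
      assume "\<not> length e \<le> length w"
      then have "tape_of e (int (length w)) = e ! length w" unfolding tape_of_def by simp
      moreover have "e ! length w \<in> {1,2,3}" using eset \<open>\<not> length e \<le> length w\<close> nth_mem
        by (metis linorder_not_le subsetD)
      moreover have "tape_of e (int (length w)) = 0" using th unfolding tape_holds_def by simp
      ultimately show False by auto
    qed
    then have "tape_of e (int i) = w ! i" using th i unfolding tape_holds_def by simp
    moreover have "tape_of e (int i) = 3" using i unfolding tape_of_def by simp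
    moreover have "w ! i \<in> {1,2}" using wset i \<open>length e \<le> length w\<close> nth_mem
      by (metis order.strict_trans2 subsetD)
    ultimately show False by auto
  qed
qed

lemma not_T: "\<not> PRT_T_learnable Fam0"
proof
  assume "PRT_T_learnable Fam0"
  then obtain M T p where MT: "\<forall>F \<in> range Fam0. \<forall>f. enumeration f F \<longrightarrow>
           prt_conv Fam0 {} M (\<lambda>n. T (restr f n)) F (poly p (mi Fam0 F))"
    unfolding PRT_T_learnable_def by blast
  define fa :: "nat \<Rightarrow> nat" where "fa = (\<lambda>_. 0)"
  have ra: "{0} \<in> range Fam0" using rangeI[of Fam0 1] by (simp add: Fam0_def)
  have rb: "{0,1} \<in> range Fam0" using rangeI[of Fam0 0] by (simp add: Fam0_def)
  have "enumeration fa {0}" unfolding enumeration_def fa_def by auto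
  then have "prt_conv Fam0 {} M (\<lambda>n. T (restr fa n)) {0} (poly p (mi Fam0 {0}))"
    using MT ra by blast
  then obtain i0 h0 ts0 where A: "\<forall>j\<ge>i0. learner_val {} M (T (restr fa j)) h0" "Fam0 h0 = {0}"
    unfolding prt_conv_def by (elim exE conjE) (rule that)
  have h0: "h0 \<noteq> 0"
  proof
    assume "h0 = 0"
    then have "(1::nat) \<in> Fam0 h0" by (simp add: Fam0_def)
    then show False using A(2) by simp
  qed
  define bb where "bb = poly p (mi Fam0 {0,1})"
  define D where "D = i0 + bb"
  define fb :: "nat \<Rightarrow> nat" where "fb = (\<lambda>j. if j \<le> D then 0 else 1)"
  have "fb 0 = 0" "fb (Suc D) = 1" unfolding fb_def by auto
  then have "{0,1} \<subseteq> range fb" by (metis empty_subsetI insert_subset rangeI)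
  moreover have "range fb \<subseteq> {0,1}" unfolding fb_def by auto
  ultimately have "range fb = {0,1}" by (rule equalityI[rotated])
  then have "enumeration fb {0,1}" unfolding enumeration_def by auto
  then have "prt_conv Fam0 {} M (\<lambda>n. T (restr fb n)) {0,1} bb"
    using MT rb unfolding bb_def by blast
  then obtain i1 h1 ts1 where B: "\<forall>j\<ge>i1. learner_val {} M (T (restr fb j)) h1" "Fam0 h1 = {0,1}"
    "\<forall>j\<le>i1. halts_at {} M (T (restr fb j)) (ts1 j)" "(\<Sum>j\<le>i1. ts1 j) < bb"
    unfolding prt_conv_def by (elim exE conjE) (rule that)
  have same: "restr fb j = restr fa j" if "j \<le> D" for j
    unfolding restr_def fa_def fb_def using that by auto
  have "h1 \<noteq> h0"
  proof
    assume "h1 = h0"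
    then have "(1::nat) \<in> Fam0 h0" using B(2) by simp
    then show False using A(2) by simp
  qed
  show False
  proof (cases "i1 \<le> D")
    case True
    have "learner_val {} M (T (restr fb D)) h1" using B(1) True by blast
    then have "learner_val {} M (T (restr fa D)) h1" using same[of D] by simp
    moreover have "learner_val {} M (T (restr fa D)) h0" using A(1) D_def by simp
    ultimately show False using learner_val_fun \<open>h1 \<noteq> h0\<close> by metis
  next
    case False
    have "\<exists>j\<in>{i0..D}. ts1 j = 0"
    proof (rule ccontr)
      assume nz: "\<not> ?thesis"
      have "(\<Sum>j\<in>{i0..D}. (1::nat)) \<le> (\<Sum>j\<in>{i0..D}. ts1 j)"
      proof (rule sum_mono)
        fix j assume "j \<in> {i0..D}"
        then have "ts1 j \<noteq> 0" using nz by (metis)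
        then show "1 \<le> ts1 j" by simp
      qed
      also have "\<dots> \<le> (\<Sum>j\<le>i1. ts1 j)"
        by (rule sum_mono2) (use False in auto)
      finally have "bb + 1 \<le> (\<Sum>j\<le>i1. ts1 j)" unfolding D_def by simp
      then show False using B(4) by simp
    qed
    then obtain j where j: "i0 \<le> j" "j \<le> D" "ts1 j = 0" by auto
    have "j \<le> i1" using j(2) False by simp
    then have "halts_at {} M (T (restr fb j)) (ts1 j)" using B(3) by blast
    then have "halts_at {} M (T (restr fa j)) 0" using same[OF j(2)] j(3) by simp
    moreover have "learner_val {} M (T (restr fa j)) h0" using A(1) j by simp
    ultimately show False using halt0_val h0 by metis
  qed
qed



lemma conf_Suc:
  assumes "find (applies (conf A M \<sigma> n)) M = Some r"
  shows "conf A M \<sigma> (Suc n) = fire A (conf A M \<sigma> n) r"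
  using assms unfolding conf_def by (simp add: tm_step_def)

lemma conf_0: "conf A M \<sigma> 0 = (0, tape_of (enc_list \<sigma>), 0)"
  unfolding conf_def init_def by simp

lemma tape_neg: "i < 0 \<Longrightarrow> tape_of w i = 0"
  unfolding tape_of_def by simp

lemma tape_le3: "tape_of (enc_list \<sigma>) i \<le> 3"
proof -
  have "\<forall>x\<in>set (enc_list \<sigma>). x \<le> 3" using enc_set by fastforce
  then show ?thesis unfolding tape_of_def by (auto simp: nth_mem)
qed

definition LM :: tm where
  "LM = [Wr 0 0 1 0 MoveL, Wr 0 1 1 1 MoveL, Wr 0 2 1 2 MoveL, Wr 0 3 1 3 MoveL,
         Wr 1 0 2 0 MoveL, Wr 2 0 3 2 Stay, Qu 3 4 5, Wr 4 2 6 2 MoveR]"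

lemma read_nat_one:
  assumes "tp h = 2" "tp (h + 1) = 0" shows "read_nat tp h = 1"
proof -
  have "(LEAST k. tp (h + int k) \<notin> {1, 2}) = 1"
  proof (rule Least_equality)
    show "tp (h + int 1) \<notin> {1, 2}" using assms by simp
  next
    fix y assume y: "tp (h + int y) \<notin> {1, 2}"
    show "1 \<le> y"
    proof (rule ccontr)
      assume "\<not> 1 \<le> y"
      then have "y = 0" by simp
      then show False using y assms by simp
    qed
  qed
  then show ?thesis unfolding read_nat_def using assms by simp
qed

lemma LM_run:
  fixes \<sigma> A
  defines "tp \<equiv> tape_of (enc_list \<sigma>)"
  shows "conf A LM \<sigma> 1 = (1, tp, -1)"
    and "conf A LM \<sigma> 2 = (2, tp, -2)"
    and "conf A LM \<sigma> 3 = (3, tp(-2 := 2), -2)"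
    and "conf A LM \<sigma> 4 = (if 1 \<in> A then 4 else 5, tp(-2 := 2), -2)"
    and "1 \<in> A \<Longrightarrow> conf A LM \<sigma> 5 = (6, tp(-2 := 2), -1)"
proof -
  have m1: "tp (-1) = 0" "tp (-2) = 0" unfolding tp_def by (simp_all add: tape_neg)
  have a: "tp 0 \<le> 3" unfolding tp_def by (rule tape_le3)
  have f0: "find (applies (0, tp, 0)) LM = Some (Wr 0 (tp 0) 1 (tp 0) MoveL)"
    using a unfolding LM_def by (cases "tp 0"; cases "tp 0 - 1"; cases "tp 0 - 2"; simp)
  have c0: "conf A LM \<sigma> 0 = (0, tp, 0)" unfolding tp_def by (rule conf_0)
  show c1: "conf A LM \<sigma> 1 = (1, tp, -1)"
    using conf_Suc[of A LM \<sigma> 0, unfolded c0, OF f0] by (simp add: mv_def)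
  have "find (applies (1, tp, -1)) LM = Some (Wr 1 0 2 0 MoveL)"
    using m1 unfolding LM_def by simp
  from conf_Suc[of A LM \<sigma> 1, unfolded c1, OF this]
  show c2: "conf A LM \<sigma> 2 = (2, tp, -2)" using m1 by (simp add: mv_def numeral_2_eq_2 fun_upd_idem)
  have "find (applies (2, tp, -2)) LM = Some (Wr 2 0 3 2 Stay)"
    using m1 unfolding LM_def by simp
  from conf_Suc[of A LM \<sigma> 2, unfolded c2, OF this]
  show c3: "conf A LM \<sigma> 3 = (3, tp(-2 := 2), -2)" by (simp add: mv_def numeral_3_eq_3)
  have "find (applies (3, tp(-2 := 2), -2)) LM = Some (Qu 3 4 5)"
    unfolding LM_def by simp
  moreover have "read_nat (tp(-2 := 2)) (-2) = 1" by (rule read_nat_one) (use m1 in simp_all)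
  ultimately show c4: "conf A LM \<sigma> 4 = (if 1 \<in> A then 4 else 5, tp(-2 := 2), -2)"
    using conf_Suc[of A LM \<sigma> 3, unfolded c3] by (simp add: numeral_eq_Suc)
  assume "1 \<in> A"
  then have c4': "conf A LM \<sigma> 4 = (4, tp(-2 := 2), -2)" using c4 by simp
  have "find (applies (4, tp(-2 := 2), -2)) LM = Some (Wr 4 2 6 2 MoveR)"
    unfolding LM_def by simp
  from conf_Suc[of A LM \<sigma> 4, unfolded c4', OF this]
  show "conf A LM \<sigma> 5 = (6, tp(-2 := 2), -1)" by (simp add: mv_def numeral_eq_Suc)
qed


lemma halted_stable:
  assumes "halted M (conf A M \<sigma> n)" shows "conf A M \<sigma> (n + k) = conf A M \<sigma> n"
proof (induction k)
  case 0 then show ?case by simp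
next
  case (Suc k)
  have "tm_step A M (conf A M \<sigma> (n + k)) = None"
    using assms Suc unfolding tm_step_def halted_def by simp
  then show ?case using Suc unfolding conf_def by simp
qed

lemma bin0: "bin 0 = []" by (subst bin.simps) simp
lemma bin1: "bin 1 = [2]" by (subst bin.simps) (simp add: bin0)

lemma LM_halts: "halts_at A LM \<sigma> (if 1 \<in> A then 5 else 4)"
  and LM_val: "learner_val A LM \<sigma> (if 1 \<in> A then 0 else 1)"
proof -
  define tp where "tp = tape_of (enc_list \<sigma>)"
  have st: "fst (conf A LM \<sigma> s) \<le> 5" if "s < 5" for s
  proof -
    have "s = 0 \<or> s = 1 \<or> s = 2 \<or> s = 3 \<or> s = 4" using that by arith
    then show ?thesis using LM_run[of A \<sigma>] conf_0[of A LM \<sigma>] by auto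
  qed
  have "halts_at A LM \<sigma> (if 1 \<in> A then 5 else 4) \<and>
        learner_val A LM \<sigma> (if 1 \<in> A then 0 else 1)"
  proof (cases "1 \<in> A")
    case True
    have c5: "conf A LM \<sigma> 5 = (6, tp(-2 := 2), -1)" using LM_run(5)[OF True] tp_def by simp
    have h5: "halted LM (conf A LM \<sigma> 5)" unfolding halted_def c5 by (simp add: LM_def)
    have "\<not> halted LM (conf A LM \<sigma> s)" if "s < 5" for s
    proof
      assume "halted LM (conf A LM \<sigma> s)"
      then have "conf A LM \<sigma> (s + (5 - s)) = conf A LM \<sigma> s" by (rule halted_stable)
      then have "conf A LM \<sigma> 5 = conf A LM \<sigma> s" using that by simp
      then have "fst (conf A LM \<sigma> s) = 6" using c5 by (metis fst_conv)
      then show False using st[OF that] by simp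
    qed
    then have ha: "halts_at A LM \<sigma> 5" unfolding halts_at_def using h5 by blast
    have "tape_holds (tp(-2 := 2)) (-1) (bin 0)" unfolding tape_holds_def bin0 tp_def
      by (simp add: tape_neg)
    then have "learner_val A LM \<sigma> 0" unfolding learner_val_def outputs_def using ha c5 by auto
    then show ?thesis using ha True by simp
  next
    case False
    have c4: "conf A LM \<sigma> 4 = (5, tp(-2 := 2), -2)" using LM_run(4)[of A \<sigma>] False tp_def by simp
    have h4: "halted LM (conf A LM \<sigma> 4)" unfolding halted_def c4 by (simp add: LM_def)
    have "\<not> halted LM (conf A LM \<sigma> s)" if "s < 4" for s
    proof
      assume "halted LM (conf A LM \<sigma> s)"
      then have "conf A LM \<sigma> (s + (4 - s)) = conf A LM \<sigma> s" by (rule halted_stable)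
      then have "conf A LM \<sigma> 4 = conf A LM \<sigma> s" using that by simp
      moreover have "s = 0 \<or> s = 1 \<or> s = 2 \<or> s = 3" using that by arith
      ultimately show False using c4 LM_run[of A \<sigma>] conf_0[of A LM \<sigma>] by auto
    qed
    then have ha: "halts_at A LM \<sigma> 4" unfolding halts_at_def using h4 by blast
    have "tape_holds (tp(-2 := 2)) (-2) (bin 1)" unfolding tape_holds_def bin1 tp_def
      by (simp add: tape_neg)
    then have "learner_val A LM \<sigma> 1" unfolding learner_val_def outputs_def using ha c4 by auto
    then show ?thesis using ha False by simp
  qed
  then show "halts_at A LM \<sigma> (if 1 \<in> A then 5 else 4)"
    and "learner_val A LM \<sigma> (if 1 \<in> A then 0 else 1)" by auto
qed

lemma queries_le: "queries A M \<sigma> t \<le> t"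
proof -
  have "queries A M \<sigma> t \<le> card {..<t}" unfolding queries_def by (rule card_mono) auto
  then show ?thesis by simp
qed

lemma O_learn: "PRT_O_learnable Fam0"
  unfolding PRT_O_learnable_def
proof (intro exI ballI allI impI)
  fix F f assume "F \<in> range Fam0"
  define h where "h = (if 1 \<in> F then 0 else (1::nat))"
  define t where "t = (if 1 \<in> F then 5 else (4::nat))"
  have Fh: "Fam0 h = F"
    using \<open>F \<in> range Fam0\<close> unfolding h_def Fam0_def by auto
  show "prt_conv Fam0 F LM (restr f) F (poly [:100:] (mi Fam0 F))"
    unfolding prt_conv_def
  proof (intro exI conjI allI impI)
    show "learner_val F LM (restr f j) h" for j unfolding h_def by (rule LM_val)
    show "Fam0 h = F" by (rule Fh)
    show "halts_at F LM (restr f j) t" if "j \<le> 0" for j unfolding t_def by (rule LM_halts)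
    show "(\<Sum>j\<le>(0::nat). t) < poly [:100:] (mi Fam0 F)" unfolding t_def by (simp add: card_atMost)
    have "queries F LM (restr f 0) t \<le> t" by (rule queries_le)
    then show "(\<Sum>j\<le>0. queries F LM (restr f j) t) \<le> poly [:100:] (mi Fam0 F)"
      unfolding t_def by (simp add: card_atMost split: if_splits)
  qed
qed



definition EM :: tm where
  "EM = [Wr 0 3 2 3 MoveR, Wr 0 1 1 1 MoveR, Wr 0 2 1 2 MoveR,
     Wr 1 1 1 1 MoveR, Wr 1 2 1 2 MoveR, Wr 1 3 3 3 MoveR,
     Wr 3 3 9 3 Stay, Wr 3 1 8 1 Stay, Wr 3 2 8 2 Stay,
     Wr 2 3 9 3 Stay, Wr 2 2 4 2 MoveR, Wr 2 1 8 1 Stay,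
     Wr 4 3 9 3 Stay, Wr 4 1 8 1 Stay, Wr 4 2 8 2 Stay,
     Wr 8 1 8 1 Stay, Wr 8 2 8 2 Stay]"

lemma EM_free: "oracle_free EM"
  unfolding oracle_free_def EM_def by simp

lemma steps_add: "steps A M c (m + k) = steps A M (steps A M c m) k"
  by (induction k) (simp_all split: option.splits)

lemma steps_one:
  assumes "find (applies c) M = Some r"
  shows "steps A M c (Suc k) = steps A M (fire A c r) k"
proof -
  have "steps A M c (1 + k) = steps A M (steps A M c 1) k" by (rule steps_add)
  moreover have "steps A M c 1 = fire A c r" using assms by (simp add: tm_step_def)
  ultimately show ?thesis by simp
qed

lemma scan:
  assumes "\<forall>i<m. tp (p + int i) \<in> {1,2}"
  shows "steps A EM (1, tp, p) m = (1, tp, p + int m)"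
  using assms
proof (induction m arbitrary: p)
  case 0 then show ?case by simp
next
  case (Suc m)
  have tp: "tp p \<in> {1,2}" using Suc.prems by (metis add.right_neutral of_nat_0 zero_less_Suc)
  have f: "find (applies (1, tp, p)) EM = Some (Wr 1 (tp p) 1 (tp p) MoveR)"
    using tp unfolding EM_def by auto
  have "\<forall>i<m. tp ((p + 1) + int i) \<in> {1,2}"
  proof (intro allI impI)
    fix i assume "i < m"
    then have "tp (p + int (Suc i)) \<in> {1,2}" using Suc.prems by blast
    then show "tp ((p + 1) + int i) \<in> {1,2}" by (simp add: add.assoc)
  qed
  then have "steps A EM (1, tp, p + 1) m = (1, tp, p + 1 + int m)" by (rule Suc.IH)
  then show ?case using steps_one[OF f, of A m] by (simp add: mv_def add.assoc)
qed

lemma loop8: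
  assumes "tp p \<in> {1,2}"
  shows "steps A EM (8, tp, p) k = (8, tp, p)"
proof (induction k)
  case 0 then show ?case by simp
next
  case (Suc k)
  have f: "find (applies (8, tp, p)) EM = Some (Wr 8 (tp p) 8 (tp p) Stay)"
    using assms unfolding EM_def by auto
  show ?case using steps_one[OF f, of A k] Suc by (simp add: mv_def)
qed

lemma never_halts:
  assumes "steps A EM (init \<sigma>) k0 = (8, tp, p)" "tp p \<in> {1,2}"
  shows "\<not> halted EM (conf A EM \<sigma> t)"
proof
  assume h: "halted EM (conf A EM \<sigma> t)"
  have "conf A EM \<sigma> (t + k0) = conf A EM \<sigma> t" using h by (rule halted_stable)
  moreover have "conf A EM \<sigma> (t + k0) = (8, tp, p)"
    unfolding conf_def using steps_add[of A EM "init \<sigma>" k0 t] assms loop8[of tp p A t, OF assms(2)]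
    by (simp add: add.commute)
  moreover have "\<not> halted EM (8, tp, p)"
    using assms(2) unfolding halted_def EM_def by auto
  ultimately show False using h by simp
qed

lemma halts_iff: "(\<exists>t. halts_at A M \<sigma> t) \<longleftrightarrow> (\<exists>t. halted M (conf A M \<sigma> t))"
proof
  assume "\<exists>t. halts_at A M \<sigma> t" then show "\<exists>t. halted M (conf A M \<sigma> t)"
    unfolding halts_at_def by blast
next
  assume "\<exists>t. halted M (conf A M \<sigma> t)"
  then have "halts_at A M \<sigma> (LEAST t. halted M (conf A M \<sigma> t))"
    unfolding halts_at_def by (meson LeastI_ex not_less_Least)
  then show "\<exists>t. halts_at A M \<sigma> t" by blast
qed

lemma halted9: "halted EM (9, tp, p)"
  unfolding halted_def EM_def by simp

lemma tape_nth: "i < length w \<Longrightarrow> tape_of w (int i) = w ! i"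
  unfolding tape_of_def by simp

lemma enc2: "enc_list [n, x] = bin n @ 3 # bin x @ [3]"
  unfolding enc_list_def by simp


lemma step_rule:
  assumes "find (applies c) M = Some r" "fire A c r = c'"
  shows "steps A M c (Suc k) = steps A M c' k"
  using steps_one[OF assms(1)] assms(2) by simp

lemma bin_Suc_ne: "n \<noteq> 0 \<Longrightarrow> \<exists>d r. bin n = d # r \<and> d \<in> {1,2}"
  using bin_set[of n] bin_eq_Nil[of n] by (cases "bin n") auto

lemma bin_ge2: "x \<ge> 2 \<Longrightarrow> \<exists>d1 d2 r. bin x = d1 # d2 # r \<and> d1 \<in> {1,2} \<and> d2 \<in> {1,2}"
proof -
  assume x: "x \<ge> 2"
  have "bin x = (x mod 2 + 1) # bin (x div 2)" using x by (subst bin.simps) simp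
  moreover have "x div 2 \<noteq> 0" using x by simp
  ultimately show ?thesis using bin_set[of x] bin_Suc_ne[of "x div 2"] by auto
qed

lemma EM_correct: "(\<exists>t. halted EM (conf {} EM [n, x] t)) \<longleftrightarrow> x \<in> Fam0 n"
proof -
  define w where "w = bin n @ 3 # bin x @ [3]"
  define T where "T = tape_of w"
  have init: "init [n, x] = (0, T, 0)" unfolding init_def T_def w_def enc2 by simp
  have cdef: "conf {} EM [n, x] t = steps {} EM (0, T, 0) t" for t
    unfolding conf_def init by simp
  have acc: "\<exists>t. halted EM (conf {} EM [n, x] t)" if "steps {} EM (0, T, 0) k = (9, T, p)" for k p
    using halted9 that cdef by metis
  have rej: "\<not> (\<exists>t. halted EM (conf {} EM [n, x] t))"
    if "steps {} EM (0, T, 0) k = (8, T, p)" "T p \<in> {1,2}" for k p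
    using never_halts[of "{}" "[n,x]" k T p] that init by auto
  show ?thesis
  proof (cases "n = 0")
    case True
    then have w: "w = 3 # bin x @ [3]" unfolding w_def by (simp add: bin0)
    have T0: "T 0 = 3" unfolding T_def w using tape_nth[of 0 "3 # bin x @ [3]"] by simp
    have s0: "steps {} EM (0, T, 0) (Suc k) = steps {} EM (2, T, 1) k" for k
      apply (rule step_rule) using T0 apply (auto simp add: EM_def) [] using T0 apply (auto simp add: mv_def fun_upd_idem_iff) [] done
    consider "x = 0" | "x = 1" | "x \<ge> 2" by linarith
    then show ?thesis
    proof cases
      case 1
      have T1: "T 1 = 3" unfolding T_def w 1 bin0 using tape_nth[of 1 "[3,3]"] by simp
      have "steps {} EM (2, T, 1) (Suc 0) = steps {} EM (9, T, 1) 0"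
        apply (rule step_rule) using T1 apply (auto simp add: EM_def) [] using T1 apply (auto simp add: mv_def fun_upd_idem_iff) [] done
      then have "steps {} EM (0, T, 0) 2 = (9, T, 1)" using s0[of 1] by (simp add: numeral_2_eq_2)
      then show ?thesis using acc 1 True by (auto simp: Fam0_def)
    next
      case 2
      have T1: "T 1 = 2" unfolding T_def w 2 bin1 using tape_nth[of 1 "[3,2,3]"] by simp
      have T2: "T 2 = 3" unfolding T_def w 2 bin1 using tape_nth[of 2 "[3,2,3]"] by simp
      have a: "steps {} EM (2, T, 1) (Suc k) = steps {} EM (4, T, 2) k" for k
        apply (rule step_rule) using T1 apply (auto simp add: EM_def) [] using T1 apply (auto simp add: mv_def fun_upd_idem_iff) [] done
      have b: "steps {} EM (4, T, 2) (Suc 0) = steps {} EM (9, T, 2) 0"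
        apply (rule step_rule) using T2 apply (auto simp add: EM_def) [] using T2 apply (auto simp add: mv_def fun_upd_idem_iff) [] done
      have "steps {} EM (0, T, 0) 3 = (9, T, 2)" using s0[of 2] a[of 1] b
        by (simp add: numeral_3_eq_3 numeral_2_eq_2)
      then show ?thesis using acc 2 True by (auto simp: Fam0_def)
    next
      case 3
      obtain d1 d2 r where b: "bin x = d1 # d2 # r" "d1 \<in> {1,2}" "d2 \<in> {1,2}"
        using bin_ge2[OF 3] by blast
      have T1: "T 1 = d1" unfolding T_def w b(1) using tape_nth[of 1 "3 # (d1 # d2 # r) @ [3]"] by simp
      have T2: "T 2 = d2" unfolding T_def w b(1) using tape_nth[of 2 "3 # (d1 # d2 # r) @ [3]"] by simp
      have nm: "x \<notin> Fam0 n" using 3 True by (auto simp: Fam0_def)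
      show ?thesis
      proof (cases "d1 = 1")
        case True
        have "steps {} EM (2, T, 1) (Suc 0) = steps {} EM (8, T, 1) 0"
          apply (rule step_rule) using T1 True apply (auto simp add: EM_def) [] using T1 True apply (auto simp add: mv_def fun_upd_idem_iff) [] done
        then have "steps {} EM (0, T, 0) 2 = (8, T, 1)" using s0[of 1] by (simp add: numeral_2_eq_2)
        then show ?thesis using rej[of 2 1] T1 b(2) nm by blast
      next
        case False
        then have d1: "d1 = 2" using b(2) by auto
        have a: "steps {} EM (2, T, 1) (Suc k) = steps {} EM (4, T, 2) k" for k
          apply (rule step_rule) using T1 d1 apply (auto simp add: EM_def) [] using T1 d1 apply (auto simp add: mv_def fun_upd_idem_iff) [] done
        have c: "steps {} EM (4, T, 2) (Suc 0) = steps {} EM (8, T, 2) 0"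
          apply (rule step_rule[where r="Wr 4 (T 2) 8 (T 2) Stay"]) using T2 b(3) apply (auto simp add: EM_def) [] using T2 apply (simp add: mv_def fun_upd_idem_iff) done
        have "steps {} EM (0, T, 0) 3 = (8, T, 2)" using s0[of 2] a[of 1] c
          by (simp add: numeral_3_eq_3 numeral_2_eq_2)
        then show ?thesis using rej[of 3 2] T2 b(3) nm by blast
      qed
    qed
  next
    case False
    obtain d r where b: "bin n = d # r" "d \<in> {1,2}" using bin_Suc_ne[OF False] by blast
    define L where "L = length (bin n)"
    have L1: "L \<ge> 1" unfolding L_def b by simp
    have T0: "T 0 = d" unfolding T_def w_def b using tape_nth[of 0 "(d # r) @ 3 # bin x @ [3]"] by simp
    have s0: "steps {} EM (0, T, 0) (Suc k) = steps {} EM (1, T, 1) k" for k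
      apply (rule step_rule[where r="Wr 0 (T 0) 1 (T 0) MoveR"]) using T0 b(2) apply (auto simp add: EM_def) [] using T0 apply (simp add: mv_def fun_upd_idem_iff) done
    have Tin: "T (int i) = bin n ! i" if "i < L" for i
      unfolding T_def w_def using tape_nth[of i "bin n @ 3 # bin x @ [3]"] that L_def
      by (simp add: nth_append)
    have "\<forall>i<L - 1. T (1 + int i) \<in> {1,2}"
    proof (intro allI impI)
      fix i assume "i < L - 1"
      then have "Suc i < L" by simp
      then have "T (int (Suc i)) = bin n ! Suc i" by (rule Tin)
      moreover have "bin n ! Suc i \<in> {1,2}" using bin_set[of n] \<open>Suc i < L\<close> L_def nth_mem by blast
      ultimately show "T (1 + int i) \<in> {1,2}" by simp
    qed
    then have sc: "steps {} EM (1, T, 1) (L - 1) = (1, T, int L)"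
      using scan[of "L - 1" T 1 "{}"] L1 by simp
    have TL: "T (int L) = 3" unfolding T_def w_def L_def
      using tape_nth[of "length (bin n)" "bin n @ 3 # bin x @ [3]"] by (simp add: nth_append)
    have s1: "steps {} EM (1, T, int L) (Suc k) = steps {} EM (3, T, int L + 1) k" for k
      apply (rule step_rule) using TL apply (auto simp add: EM_def) [] using TL apply (auto simp add: mv_def fun_upd_idem_iff) [] done
    have chain: "steps {} EM (0, T, 0) (Suc ((L - 1) + Suc k)) = steps {} EM (3, T, int L + 1) k" for k
    proof -
      have "steps {} EM (0, T, 0) (Suc ((L - 1) + Suc k)) = steps {} EM (1, T, 1) ((L - 1) + Suc k)"
        by (rule s0)
      also have "\<dots> = steps {} EM (steps {} EM (1, T, 1) (L - 1)) (Suc k)" by (rule steps_add)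
      also have "\<dots> = steps {} EM (1, T, int L) (Suc k)" by (simp only: sc)
      also have "\<dots> = steps {} EM (3, T, int L + 1) k" by (rule s1)
      finally show ?thesis .
    qed
    have TL1: "T (int L + 1) = (bin x @ [3]) ! 0"
    proof -
      have "T (int (Suc L)) = w ! Suc L" unfolding T_def
        by (rule tape_nth) (simp add: w_def L_def)
      moreover have "w ! Suc L = (bin x @ [3]) ! 0" unfolding w_def L_def by (simp add: nth_append)
      moreover have "int (Suc L) = int L + 1" by simp
      ultimately show ?thesis by (simp add: add.commute)
    qed
    show ?thesis
    proof (cases "x = 0")
      case True
      have T3: "T (int L + 1) = 3" using TL1 True by (simp add: bin0)
      have "steps {} EM (3, T, int L + 1) (Suc 0) = steps {} EM (9, T, int L + 1) 0"
        apply (rule step_rule) using T3 apply (auto simp add: EM_def) [] using T3 apply (auto simp add: mv_def fun_upd_idem_iff) [] done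
      then have "steps {} EM (0, T, 0) (Suc ((L - 1) + Suc (Suc 0))) = (9, T, int L + 1)"
        using chain[of "Suc 0"] by simp
      then have "\<exists>t. halted EM (conf {} EM [n, x] t)" by (rule acc)
      moreover have "x \<in> Fam0 n" using True by (simp add: Fam0_def)
      ultimately show ?thesis by blast
    next
      case xF: False
      obtain e r' where e: "bin x = e # r'" "e \<in> {1,2}" using bin_Suc_ne[OF xF] by blast
      have T3: "T (int L + 1) = e" using TL1 e by simp
      have "steps {} EM (3, T, int L + 1) (Suc 0) = steps {} EM (8, T, int L + 1) 0"
        apply (rule step_rule[where r="Wr 3 (T (int L + 1)) 8 (T (int L + 1)) Stay"]) using T3 e(2) apply (auto simp add: EM_def) [] using T3 apply (simp add: mv_def fun_upd_idem_iff) done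
      then have "steps {} EM (0, T, 0) (Suc ((L - 1) + Suc (Suc 0))) = (8, T, int L + 1)"
        using chain[of "Suc 0"] by simp
      moreover have "x \<notin> Fam0 n" using xF False by (simp add: Fam0_def)
      ultimately show ?thesis using rej T3 e(2) by blast
    qed
  qed
qed

lemma fam_indexed: "indexed_family Fam0"
  unfolding indexed_family_def
  using EM_free EM_correct halts_iff by blast


theorem lemma3p9:
  shows "\<exists>Fam. indexed_family Fam \<and> PRT_O_learnable Fam \<and> \<not> PRT_T_learnable Fam"
  using fam_indexed O_learn not_T by blast

end
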